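(* For all integers $I\ge 0$ and $S\ge 1$, the probability $P(I,S)$ that a fixed clean device $w_t$ ends up paired with an infected device in the pairing process described in the context equals $$P(I,S)=\sum_{j=L(I,S)}^{\lfloor I/2\rfloor}\pi(I,S,j)\,N(I,S,j)\,M(I,S,j),$$ where $L$, $\pi$, $N$, $M$ are the explicit functions defined in the context.
   Context: Pairing process: let $I,S\ge 0$ be integers. There are $I$ infected devices $b_1,\dots,b_I$ and $S$ clean devices $w_1,\dots,w_S$. For $t=1,\dots,I$ in this order: if $b_t$ is not yet paired and at least one device other than $b_t$ is not yet paired, then $b_t$ chooses one of the currently unpaired devices other than itself uniformly at random, independently of previous choices, and becomes paired with it; otherwise $b_t$ does nothing. Each device belongs to at most one pair. A clean device paired with an infected device becomes infected. Notation. Say that $(I,S,j)$ is in the dagger case if $I>S$, $I+S$ is odd and $j=\frac{I-S-1}{2}$. Set $L(I,S)=0$ if $I\le S$; $L(I,S)=\frac{I-S}{2}$ if $I>S$ and $I-S$ is even; $L(I,S)=\frac{I-S-1}{2}$ if $I>S$ and $I-S$ is odd. Let $z=1$ in the dagger case and $z=0$ otherwise, and put $$\pi(I,S,j)=\prod_{k=0}^{I-j-1-z}\frac{1}{I+S-1-2k}.$$ Outside the dagger case, $N(I,S,j)=\frac{1}{j!}\prod_{k=1}^{j}\binom{I-2(k-1)}{2}$. In the dagger case: $N(I,S,0)=1$; $N(I,S,1)=\binom{I}{2}-1$; and for $j\ge 2$, $N(I,S,j)=\sum_{h=S+1}^{I}N_\dagger(I,S,h)$, where $N_\dagger(I,S,I)=\frac{1}{j!}\prod_{k=0}^{j-1}\binom{I-1-2k}{2}$,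 $N_\dagger(I,S,I-1)=\frac{1}{(j-1)!}(I-2)\prod_{k=0}^{j-2}\binom{I-3-2k}{2}$, and for $S+1\le h\le I-2$: $N_\dagger(I,S,h)=0$ if $j<I-h$; $N_\dagger(I,S,h)=\prod_{k=1}^{I-h}(h-k)$ if $j=I-h$; and $N_\dagger(I,S,h)=\frac{1}{(j-I+h)!}\prod_{k=1}^{I-h}(h-k)\prod_{d=1}^{j-I+h}\binom{2h-I-1-2(d-1)}{2}$ if $j>I-h$. Finally $M(I,S,j)=S!$ in the dagger case and $M(I,S,j)=(I-2j)!\binom{S-1}{I-1-2j}$ otherwise, with the convention $\binom{A}{B}=0$ when $B<0$. *)

theory Defs
  imports "HOL-Probability.Probability"
begin

text \<open>Devices are natural numbers: infected devices b_1..b_I are 0..I-1 (b_t is t-1),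
clean devices w_1..w_S are I..I+S-1.  The state of the process is the set of
currently unpaired devices.\<close>

definition pair_step :: "nat \<Rightarrow> nat set \<Rightarrow> nat set pmf" where
  "pair_step t U =
     (if t \<in> U \<and> U - {t} \<noteq> {}
      then map_pmf (\<lambda>c. U - {t, c}) (pmf_of_set (U - {t}))
      else return_pmf U)"

definition pairing_process :: "nat \<Rightarrow> nat \<Rightarrow> nat set pmf" where
  "pairing_process I S =
     fold (\<lambda>t p. bind_pmf p (pair_step t)) [0..<I] (return_pmf {0..<I+S})"

text \<open>Clean devices never choose, so a clean device w is paired (necessarily with an
infected device) iff it is no longer unpaired at the end.\<close>
definition P_infect :: "nat \<Rightarrow> nat \<Rightarrow> nat \<Rightarrow> real" where
  "P_infect I S w = measure_pmf.prob (pairing_process I S) {U. w \<notin> U}"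

definition dagger :: "nat \<Rightarrow> nat \<Rightarrow> nat \<Rightarrow> bool" where
  "dagger I S j \<longleftrightarrow> I > S \<and> odd (I + S) \<and> int j * 2 = int I - int S - 1"

definition Lb :: "nat \<Rightarrow> nat \<Rightarrow> nat" where
  "Lb I S = (if I \<le> S then 0 else if even (I - S) then (I - S) div 2 else (I - S - 1) div 2)"

definition zz :: "nat \<Rightarrow> nat \<Rightarrow> nat \<Rightarrow> int" where
  "zz I S j = (if dagger I S j then 1 else 0)"

definition piF :: "nat \<Rightarrow> nat \<Rightarrow> nat \<Rightarrow> real" where
  "piF I S j = (\<Prod>k\<in>{0..int I - int j - 1 - zz I S j}.
                  1 / real_of_int (int I + int S - 1 - 2 * k))"

definition c2 :: "real \<Rightarrow> real" where
  "c2 x = x gchoose 2"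

definition Ndag :: "nat \<Rightarrow> nat \<Rightarrow> nat \<Rightarrow> nat \<Rightarrow> real" where
  "Ndag I S j h =
    (if h = I then
       (1 / fact j) * (\<Prod>k\<in>{0..int j - 1}. c2 (real I - 1 - 2 * real_of_int k))
     else if h = I - 1 then
       (1 / fact (j - 1)) * (real I - 2) *
         (\<Prod>k\<in>{0..int j - 2}. c2 (real I - 3 - 2 * real_of_int k))
     else if j < I - h then 0
     else if j = I - h then
       (\<Prod>k\<in>{1..int I - int h}. real h - real_of_int k)
     else
       (1 / fact (j - (I - h))) * (\<Prod>k\<in>{1..int I - int h}. real h - real_of_int k) *
         (\<Prod>d\<in>{1..int j - int I + int h}.
             c2 (2 * real h - real I - 1 - 2 * (real_of_int d - 1))))"

definition NF :: "nat \<Rightarrow> nat \<Rightarrow> nat \<Rightarrow> real" where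
  "NF I S j =
    (if dagger I S j then
       (if j = 0 then 1
        else if j = 1 then c2 (real I) - 1
        else (\<Sum>h\<in>{S+1..I}. Ndag I S j h))
     else (1 / fact j) * (\<Prod>k\<in>{1..j}. c2 (real I - 2 * (real k - 1))))"

definition binomZ :: "int \<Rightarrow> int \<Rightarrow> real" where
  "binomZ A B = (if B < 0 then 0 else real_of_int A gchoose nat B)"

definition MF :: "nat \<Rightarrow> nat \<Rightarrow> nat \<Rightarrow> real" where
  "MF I S j =
    (if dagger I S j then fact S
     else fact (I - 2 * j) * binomZ (int S - 1) (int I - 1 - 2 * int j))"

end

theory Submission
  imports Defs
begin

lemma prob_bind_pmf_of_set:
  assumes "finite A" "A \<noteq> {}"
  shows "measure_pmf.prob (bind_pmf (pmf_of_set A) f) E = (\<Sum>x\<in>A. measure_pmf.prob (f x) E) / card A"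
proof -
  have "ennreal (measure_pmf.prob (bind_pmf (pmf_of_set A) f) E) = emeasure (measure_pmf (bind_pmf (pmf_of_set A) f)) E"
    by (simp add: measure_pmf.emeasure_eq_measure)
  also have "\<dots> = (\<Sum>x\<in>A. emeasure (measure_pmf (f x)) E) / card A"
    using assms by (simp add: nn_integral_pmf_of_set)
  also have "\<dots> = (\<Sum>x\<in>A. ennreal (measure_pmf.prob (f x) E)) / of_nat (card A)"
    by (simp add: measure_pmf.emeasure_eq_measure)
  also have "\<dots> = ennreal ((\<Sum>x\<in>A. measure_pmf.prob (f x) E) / card A)"
    using assms by (simp add: divide_ennreal card_gt_0_iff ennreal_of_nat_eq_real_of_nat sum_nonneg)
  finally show ?thesis by (simp add: divide_nonneg_nonneg sum_nonneg)
qed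

definition run :: "nat list \<Rightarrow> nat set \<Rightarrow> nat set pmf" where
  "run xs U = fold (\<lambda>t p. bind_pmf p (pair_step t)) xs (return_pmf U)"

lemma fold_bind: "fold (\<lambda>t p. bind_pmf p (pair_step t)) xs p = bind_pmf p (run xs)"
proof (induction xs arbitrary: p)
  case Nil
  then show ?case by (simp add: run_def bind_return_pmf')
next
  case (Cons x xs)
  have "fold (\<lambda>t p. bind_pmf p (pair_step t)) (x#xs) p = bind_pmf (bind_pmf p (pair_step x)) (run xs)"
    using Cons by simp
  also have "\<dots> = bind_pmf p (\<lambda>U. bind_pmf (pair_step x U) (run xs))" by (simp add: bind_assoc_pmf)
  also have "\<dots> = bind_pmf p (run (x#xs))"
  proof -
    have "run (x#xs) U = fold (\<lambda>t p. bind_pmf p (pair_step t)) xs (pair_step x U)" for U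
      by (simp add: run_def bind_return_pmf)
    then have "run (x#xs) = (\<lambda>U. bind_pmf (pair_step x U) (run xs))" using Cons.IH by (intro ext) simp
    then show ?thesis by simp
  qed
  finally show ?case .
qed

lemma run_Nil: "run [] U = return_pmf U" by (simp add: run_def)

lemma run_Cons: "run (t#xs) U = bind_pmf (pair_step t U) (run xs)"
  by (simp add: run_def fold_bind bind_return_pmf)

lemma set_pair_step: "V \<in> set_pmf (pair_step t U) \<Longrightarrow> V \<subseteq> U"
  by (auto simp: pair_step_def split: if_splits)

lemma run_subset: "V \<in> set_pmf (run xs U) \<Longrightarrow> V \<subseteq> U"
proof (induction xs arbitrary: U)
  case Nil then show ?case by (simp add: run_Nil)
next
  case (Cons x xs) then show ?case
    by (auto simp: run_Cons dest!: set_pair_step)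
qed

lemma run_notin: "w \<notin> U \<Longrightarrow> measure_pmf.prob (run xs U) {V. w \<notin> V} = 1"
  by (subst measure_pmf.prob_eq_1) (auto simp: AE_measure_pmf_iff dest!: run_subset)

fun Q :: "nat \<Rightarrow> nat \<Rightarrow> real" where
  "Q 0 c = 0"
| "Q (Suc a) 0 = 0"
| "Q (Suc a) (Suc c) = (real a * Q (a - 1) (Suc c) + 1 + real c * Q a c) / real (a + c + 1)"

lemma run_prob:
  assumes "U \<subseteq> {t..<I+S}" "w \<in> U" "I \<le> w" "t \<le> I"
  shows "measure_pmf.prob (run [t..<I] U) {V. w \<notin> V} = Q (card {x\<in>U. x < I}) (card {x\<in>U. I \<le> x})"
  using assms
proof (induction "I - t" arbitrary: t U)
  case 0
  then have "t = I" by simp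
  with 0 have "{x\<in>U. x < I} = {}" by auto
  then have c0: "card {x\<in>U. x < I} = 0" by (metis card.empty)
  have "measure_pmf.prob (run [t..<I] U) {V. w \<notin> V} = 0" using 0 \<open>t = I\<close> by (simp add: run_Nil)
  then show ?case by (simp only: c0 Q.simps(1))
next
  case (Suc n)
  then have tI: "t < I" by simp
  have upt: "[t..<I] = t # [Suc t..<I]" using tI by (simp add: upt_conv_Cons)
  show ?case
  proof (cases "t \<in> U")
    case False
    then have "pair_step t U = return_pmf U" by (simp add: pair_step_def)
    moreover have "U \<subseteq> {Suc t..<I+S}"
    proof
      fix x assume "x \<in> U"
      then show "x \<in> {Suc t..<I+S}" using Suc.prems(1) False by (cases "x = t") auto
    qed
    ultimately show ?thesis using Suc.hyps(1)[of "Suc t" U] Suc.hyps(2) Suc.prems tI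
      by (simp add: upt run_Cons bind_return_pmf)
  next
    case True
    define A where "A = U - {t}"
    have finU: "finite U" using Suc.prems(1) finite_subset by blast
    have wA: "w \<in> A" using Suc.prems tI True by (auto simp: A_def)
    have finA: "finite A" using finU by (simp add: A_def)
    have ps: "pair_step t U = map_pmf (\<lambda>c. U - {t, c}) (pmf_of_set A)"
      using True wA by (auto simp: pair_step_def A_def)
    define a where "a = card {x\<in>U. x < I}"
    define c where "c = card {x\<in>U. I \<le> x}"
    have finUa: "finite {x\<in>U. x < I}" "finite {x\<in>U. I \<le> x}" using finU by auto
    have "a \<ge> 1" unfolding a_def using True tI finUa
      by (metis (mono_tags, lifting) One_nat_def Suc_leI card_gt_0_iff empty_iff mem_Collect_eq)
    then obtain a' where a': "a = Suc a'" by (cases a) auto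
    have "c \<ge> 1" unfolding c_def using Suc.prems finUa
      by (metis (mono_tags, lifting) One_nat_def Suc_leI card_gt_0_iff empty_iff mem_Collect_eq)
    then obtain c' where c': "c = Suc c'" by (cases c) auto
    define A1 where "A1 = {x\<in>U. x < I} - {t}"
    define A2 where "A2 = {x\<in>U. I \<le> x} - {w}"
    have Asplit: "A = insert w (A1 \<union> A2)" using Suc.prems tI True by (auto simp: A_def A1_def A2_def)
    have cA1: "card A1 = a'" using a' True tI finUa by (simp add: A1_def a_def)
    have cA2: "card A2 = c'" using c' Suc.prems finUa by (simp add: A2_def c_def)
    have finA12: "finite A1" "finite A2" using finUa by (auto simp: A1_def A2_def)
    have disj: "A1 \<inter> A2 = {}" "w \<notin> A1 \<union> A2" using Suc.prems by (auto simp: A1_def A2_def)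
    have cA: "card A = a' + c' + 1"
      using Asplit disj finA12 cA1 cA2 by (simp add: card_Un_disjoint)
    define f where "f x = measure_pmf.prob (run [Suc t..<I] (U - {t, x})) {V. w \<notin> V}" for x
    have Usub: "U - {t,x} \<subseteq> {Suc t..<I+S}" for x
    proof
      fix y assume "y \<in> U - {t,x}"
      then show "y \<in> {Suc t..<I+S}" using Suc.prems(1) by (cases "y = t") auto
    qed
    have fw: "f w = 1" by (simp add: f_def run_notin)
    have f1: "f x = Q (a' - 1) (Suc c')" if "x \<in> A1" for x
    proof -
      have "f x = Q (card {y\<in>U - {t,x}. y < I}) (card {y\<in>U - {t,x}. I \<le> y})"
        unfolding f_def
        using Suc.hyps(1)[of "Suc t" "U - {t,x}"] Suc.hyps(2) Suc.prems tI that Usub[of x]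
        by (auto simp: A1_def)
      moreover have "{y\<in>U - {t,x}. y < I} = {y\<in>U. y < I} - {t,x}" by auto
      moreover have "card ({y\<in>U. y < I} - {t,x}) = a' - 1"
        using that True tI finUa a' by (auto simp: A1_def a_def card_Diff_subset)
      moreover have "{y\<in>U - {t,x}. I \<le> y} = {y\<in>U. I \<le> y}" using that tI by (auto simp: A1_def)
      ultimately show ?thesis using c' c_def by simp
    qed
    have f2: "f x = Q a' c'" if "x \<in> A2" for x
    proof -
      have "f x = Q (card {y\<in>U - {t,x}. y < I}) (card {y\<in>U - {t,x}. I \<le> y})"
        unfolding f_def
        using Suc.hyps(1)[of "Suc t" "U - {t,x}"] Suc.hyps(2) Suc.prems tI that Usub[of x]
        by (auto simp: A2_def)
      moreover have "{y\<in>U - {t,x}. y < I} = {y\<in>U. y < I} - {t}" using that by (auto simp: A2_def)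
      moreover have "card ({y\<in>U. y < I} - {t}) = a'"
        using True tI finUa a' by (simp add: a_def)
      moreover have "{y\<in>U - {t,x}. I \<le> y} = {y\<in>U. I \<le> y} - {x}" using that tI by (auto simp: A2_def)
      moreover have "card ({y\<in>U. I \<le> y} - {x}) = c'"
        using that finUa c' by (auto simp: A2_def c_def)
      ultimately show ?thesis by simp
    qed
    have "measure_pmf.prob (run [t..<I] U) {V. w \<notin> V} = (\<Sum>x\<in>A. f x) / card A"
      using finA wA by (simp add: upt run_Cons ps bind_map_pmf f_def, subst prob_bind_pmf_of_set, auto)
    also have "(\<Sum>x\<in>A. f x) = f w + (\<Sum>x\<in>A1. f x) + (\<Sum>x\<in>A2. f x)"
      using Asplit disj finA12 by (simp add: sum.union_disjoint)
    also have "\<dots> = 1 + real a' * Q (a' - 1) (Suc c') + real c' * Q a' c'"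
      using fw f1 f2 cA1 cA2 by simp
    finally show ?thesis using cA a' c' by (simp add: a_def c_def algebra_simps)
  qed
qed

lemma P_infect_Q:
  assumes "I \<le> w" "w < I + S"
  shows "P_infect I S w = Q I S"
proof -
  have "pairing_process I S = run [0..<I] {0..<I+S}" by (simp add: pairing_process_def run_def)
  moreover have "card {x\<in>{0..<I+S}. x < I} = I"
  proof -
    have "{x\<in>{0..<I+S}. x < I} = {0..<I}" by auto
    then show ?thesis by simp
  qed
  moreover have "card {x\<in>{0..<I+S}. I \<le> x} = S"
  proof -
    have "{x\<in>{0..<I+S}. I \<le> x} = {I..<I+S}" by auto
    then show ?thesis by simp
  qed
  ultimately show ?thesis using run_prob[of "{0..<I+S}" 0 I S w] assms
    by (simp add: P_infect_def)
qed

definition Cc :: "nat \<Rightarrow> nat \<Rightarrow> nat \<Rightarrow> real" where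
  "Cc I S j = (if 2*j \<le> I \<and> I - 2*j \<le> S then
     fact I * fact S / (2^j * fact j * fact (I - 2*j) * fact (S - (I - 2*j))) else 0)"

lemma Cc_val: "Cc (2*j+m) (m+r) j = fact (2*j+m) * fact (m+r) / (2^j * fact j * fact m * fact r)"
  by (simp add: Cc_def)

lemma Cc_zero: "\<not> (2*j \<le> I \<and> I - 2*j \<le> S) \<Longrightarrow> Cc I S j = 0"
  by (simp add: Cc_def)

lemma Cc_nonneg: "Cc I S j \<ge> 0"
  by (simp add: Cc_def)

lemma arith1: fixes j m r :: nat shows
 "(fact(2*(j+1)+(m+1)) * fact((m+1)+r)/(2^(j+1)*fact(j+1)*fact(m+1)*fact r) :: real)
   = real (2*j+m+2) * (fact(2*j+(m+1))*fact((m+1)+r)/(2^j*fact j*fact(m+1)*fact r))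
   + real (m+r+1) * (fact(2*(j+1)+m)*fact(m+r)/(2^(j+1)*fact(j+1)*fact m*fact r))"
proof -
  have a: "(fact(2*(j+1)+(m+1))::real) = (2*j+m+3)*(2*j+m+2)*fact(2*j+(m+1))"
    by (simp add: fact_Suc numeral_3_eq_3 numeral_2_eq_2 algebra_simps)
  have b: "(fact(2*(j+1)+m)::real) = (2*j+m+2)*fact(2*j+(m+1))"
    by (simp add: fact_Suc numeral_2_eq_2 algebra_simps)
  have c: "(fact((m+1)+r)::real) = (m+r+1)*fact(m+r)" by (simp add: algebra_simps)
  have d: "(fact(j+1)::real) = (j+1)*fact j" by (simp add: algebra_simps)
  have e: "(fact(m+1)::real) = (m+1)*fact m" by (simp add: algebra_simps)
  have p: "(1::real) + real m \<noteq> 0" "real m + 1 \<noteq> 0" "(1::real) + real j \<noteq> 0" "real j + 1 \<noteq> 0" by linarith+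
  show ?thesis unfolding a b c d e using p apply (simp add: divide_simps) apply (simp add: algebra_simps)
    by (smt (verit) fact_gt_zero of_nat_0_le_iff mult_nonneg_nonneg zero_less_power)
qed

lemma arith2: fixes m r :: nat shows
 "(fact(2*0+(m+1)) * fact((m+1)+r)/(2^0*fact 0*fact(m+1)*fact r) :: real)
   = real (m+r+1) * (fact (2*0+m)*fact(m+r)/(2^0*fact 0*fact m*fact r))"
proof -
  have c: "(fact(m+1+r)::real) = (m+r+1)*fact(m+r)" by (simp add: algebra_simps)
  have e: "(fact(m+1)::real) = (m+1)*fact m" by (simp add: algebra_simps)
  have p: "(1::real) + real m \<noteq> 0" "real m + 1 \<noteq> 0" by linarith+
  show ?thesis unfolding c e using p apply (simp add: divide_simps) apply (simp add: algebra_simps)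
    by (smt (verit) fact_gt_zero of_nat_0_le_iff mult_nonneg_nonneg)
qed

lemma arith3: fixes j r :: nat shows
 "(fact(2*(j+1)+0) * fact (0+r)/(2^(j+1)*fact (j+1)*fact 0*fact r) :: real)
   = real (2*j+1) * (fact(2*j+0)*fact (0+r)/(2^j*fact j*fact 0*fact r))"
proof -
  have a: "(fact(2*(j+1)+0)::real) = (2*j+2)*(2*j+1)*fact(2*j)"
    by (simp add: fact_Suc numeral_2_eq_2 algebra_simps)
  have d: "(fact(j+1)::real) = (j+1)*fact j" by (simp add: algebra_simps)
  have p: "(1::real) + real j \<noteq> 0" "real j + 1 \<noteq> 0" by linarith+
  show ?thesis unfolding a d using p apply (simp add: divide_simps) apply (simp add: algebra_simps)
    by (smt (verit) fact_gt_zero of_nat_0_le_iff mult_nonneg_nonneg)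
qed

lemma Cc_rec: "Cc (Suc I) S j = real I * (if j = 0 then 0 else Cc (I - 1) S (j - 1)) + real S * Cc I (S - 1) j"
proof (cases "2*j \<le> Suc I \<and> Suc I - 2*j \<le> S")
  case True
  then obtain m r where m: "Suc I = 2*j + m" and r: "S = m + r"
    by (metis add_diff_inverse_nat not_le diff_add_inverse le_add_diff_inverse)
  show ?thesis
  proof (cases j)
    case 0
    then obtain m' where m': "m = Suc m'" using m by (cases m) auto
    have "Cc (Suc I) S j = Cc (2*0 + (m'+1)) ((m'+1)+r) 0" using m m' r 0 by simp
    also have "\<dots> = real (m'+r+1) * Cc (2*0+m') (m'+r) 0" unfolding Cc_val by (rule arith2)
    also have "\<dots> = real S * Cc I (S - 1) j" using m m' r 0 by simp
    finally show ?thesis using 0 by simp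
  next
    case (Suc j')
    show ?thesis
    proof (cases m)
      case 0
      have "Cc (Suc I) S j = Cc (2*(j'+1) + 0) (0+r) (j'+1)" using m r 0 Suc by simp
      also have "\<dots> = real (2*j'+1) * Cc (2*j'+0) (0+r) j'"
        unfolding Cc_val by (rule arith3)
      also have "\<dots> = real I * Cc (I - 1) S (j - 1)" using m r 0 Suc by simp
      also have "Cc I (S - 1) j = 0" using m 0 Suc by (intro Cc_zero) simp
      ultimately show ?thesis using Suc by simp
    next
      case (Suc m')
      have "Cc (Suc I) S j = Cc (2*(j'+1) + (m'+1)) ((m'+1)+r) (j'+1)" using m r Suc \<open>j = Suc j'\<close> by simp
      also have "\<dots> = real (2*j'+m'+2) * Cc (2*j'+(m'+1)) ((m'+1)+r) j'
                  + real (m'+r+1) * Cc (2*(j'+1)+m') (m'+r) (j'+1)"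
        unfolding Cc_val by (rule arith1)
      also have "\<dots> = real I * Cc (I - 1) S (j - 1) + real S * Cc I (S - 1) j"
        using m r Suc \<open>j = Suc j'\<close> by simp
      finally show ?thesis using \<open>j = Suc j'\<close> by simp
    qed
  qed
next
  case False
  have "real I * (if j = 0 then 0 else Cc (I - 1) S (j - 1)) = 0"
  proof (cases "j = 0 \<or> I = 0")
    case False
    then have "\<not> (2*(j-1) \<le> I - 1 \<and> I - 1 - 2*(j-1) \<le> S)" using \<open>\<not> (2*j \<le> Suc I \<and> Suc I - 2*j \<le> S)\<close> by auto
    then show ?thesis by (simp add: Cc_zero)
  qed auto
  moreover have "real S * Cc I (S - 1) j = 0"
  proof (cases "S = 0")
    case False
    then have "\<not> (2*j \<le> I \<and> I - 2*j \<le> S - 1)" using \<open>\<not> (2*j \<le> Suc I \<and> Suc I - 2*j \<le> S)\<close> by auto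
    then show ?thesis by (simp add: Cc_zero)
  qed auto
  moreover have "Cc (Suc I) S j = 0" using False by (rule Cc_zero)
  ultimately show ?thesis by linarith
qed

definition Dd :: "nat \<Rightarrow> nat \<Rightarrow> nat \<Rightarrow> real" where
  "Dd I S j = (\<Prod>k<I-j. real I + real S - 1 - 2 * real k)"

definition pp :: "nat \<Rightarrow> nat \<Rightarrow> nat \<Rightarrow> real" where
  "pp I S j = Cc I S j / Dd I S j"

lemma Dd_pos: assumes "Cc I S j \<noteq> 0" shows "Dd I S j > 0"
proof -
  have v: "2*j \<le> I" "I - 2*j \<le> S" using assms by (auto simp: Cc_def split: if_splits)
  show ?thesis unfolding Dd_def
  proof (rule prod_pos)
    fix k assume "k \<in> {..<I-j}"
    then have "k + 1 \<le> I - j" by auto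
    then show "0 < real I + real S - 1 - 2 * real k" using v by linarith
  qed
qed

lemma pp_zero: "Cc I S j = 0 \<Longrightarrow> pp I S j = 0" by (simp add: pp_def)

lemma pp_rec: "real (I + S) * pp (Suc I) S j = real I * (if j = 0 then 0 else pp (I - 1) S (j - 1)) + real S * pp I (S - 1) j"
proof (cases "Cc (Suc I) S j = 0")
  case True
  have "real I * (if j = 0 then 0 else Cc (I - 1) S (j - 1)) \<ge> 0" "real S * Cc I (S - 1) j \<ge> 0"
    by (auto simp: Cc_nonneg)
  then have z: "real I * (if j = 0 then 0 else Cc (I - 1) S (j - 1)) = 0" "real S * Cc I (S - 1) j = 0"
    using Cc_rec[of I S j] True by linarith+
  have "real I * (if j = 0 then 0 else pp (I - 1) S (j - 1)) = 0"
    using z(1) by (auto simp: pp_def)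
  moreover have "real S * pp I (S - 1) j = 0" using z(2) by (auto simp: pp_def)
  moreover have "pp (Suc I) S j = 0" using True by (simp add: pp_def)
  ultimately show ?thesis by (metis add.right_neutral mult_zero_right)
next
  case False
  have v: "2*j \<le> Suc I" "Suc I - 2*j \<le> S" using False by (auto simp: Cc_def split: if_splits)
  have jI: "j \<le> I" using v by linarith
  define E where "E = (\<Prod>k<I-j. real I + real S - 2 - 2 * real k)"
  have DdS: "Dd (Suc I) S j = real (I + S) * E"
  proof -
    have "Suc I - j = Suc (I - j)" using jI by simp
    then have "Dd (Suc I) S j = (\<Prod>k<Suc (I-j). real (Suc I) + real S - 1 - 2 * real k)" by (simp add: Dd_def)
    also have "\<dots> = (real (Suc I) + real S - 1) * (\<Prod>k<I-j. real (Suc I) + real S - 1 - 2 * real (Suc k))"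
      by (subst prod.lessThan_Suc_shift) simp
    also have "\<dots> = real (I + S) * E" unfolding E_def by (simp add: algebra_simps)
    finally show ?thesis .
  qed
  have pos: "Dd (Suc I) S j > 0" using Dd_pos False by blast
  then have Ipos: "real (I + S) \<noteq> 0" and Enz: "E \<noteq> 0" using DdS by auto
  have t1: "real I * (if j = 0 then 0 else pp (I - 1) S (j - 1)) = real I * (if j = 0 then 0 else Cc (I - 1) S (j - 1)) / E"
  proof (cases "j = 0 \<or> I = 0")
    case False
    then have "Dd (I - 1) S (j - 1) = E" unfolding Dd_def E_def
      using jI by (intro prod.cong) (auto simp: of_nat_diff)
    then show ?thesis using False by (simp add: pp_def)
  qed auto
  have t2: "real S * pp I (S - 1) j = real S * Cc I (S - 1) j / E"
  proof (cases "S = 0")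
    case False
    then have "Dd I (S - 1) j = E" unfolding Dd_def E_def
      by (intro prod.cong) (auto simp: of_nat_diff)
    then show ?thesis by (simp add: pp_def)
  qed auto
  have "real (I + S) * pp (Suc I) S j = Cc (Suc I) S j / E"
    using Ipos Enz by (simp add: pp_def DdS)
  also have "\<dots> = (real I * (if j = 0 then 0 else Cc (I - 1) S (j - 1)) + real S * Cc I (S - 1) j) / E"
    by (subst Cc_rec) simp
  also have "\<dots> = real I * (if j = 0 then 0 else pp (I - 1) S (j - 1)) + real S * pp I (S - 1) j"
    unfolding t1 t2 by (simp add: add_divide_distrib)
  finally show ?thesis .
qed

definition Gs :: "nat \<Rightarrow> nat \<Rightarrow> real" where
  "Gs j S = (\<Sum>i\<le>j. fact (S+j+i) / (2^i * fact i))"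

lemma tele: "(\<Sum>i<n. (real S + real j + 1 - real i) * (fact (S+j+i) / (2^i * fact i)))
   = 2 * real n * (fact (S+j+n) / (2^n * fact n) :: real)"
proof (induction n)
  case 0 then show ?case by simp
next
  case (Suc n)
  define u where "u = (fact (S+j+n) / (2^n * fact n) :: real)"
  have f: "(fact (S+j+Suc n) / (2^Suc n * fact (Suc n)) :: real) = (real S + real j + 1 + real n) * u / (2 * (real n + 1))"
    unfolding u_def by (simp add: algebra_simps)
  have p: "2 * (real n + 1) \<noteq> 0" by (smt (verit) of_nat_0_le_iff)
  have "(\<Sum>i<Suc n. (real S + real j + 1 - real i) * (fact (S+j+i) / (2^i * fact i))) = 2 * real n * u + (real S + real j + 1 - real n) * u"
    using Suc.IH unfolding u_def by simp
  also have "\<dots> = (real S + real j + 1 + real n) * u" by (simp add: algebra_simps)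
  also have "\<dots> = 2 * real (Suc n) * ((real S + real j + 1 + real n) * u / (2 * (real n + 1)))"
    using p by (simp add: field_simps)
  finally show ?case unfolding f .
qed

lemma Gs_rec: "Gs (Suc j) S = real (S + 2 * Suc j) * Gs j S + real S * Gs (Suc j) (S - 1)"
proof -
  define u where "u i = (fact (S+j+i) / (2^i * fact i) :: real)" for i
  have A: "Gs (Suc j) S = (\<Sum>i\<le>Suc j. (real S + real j + 1 + real i) * u i)"
    unfolding Gs_def u_def by (intro sum.cong) (auto simp: algebra_simps)
  have B: "real S * Gs (Suc j) (S - 1) = real S * (\<Sum>i\<le>Suc j. u i)"
  proof (cases S)
    case (Suc S')
    then show ?thesis unfolding Gs_def u_def by (intro arg_cong[where f="\<lambda>x. real S * x"] sum.cong) auto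
  qed simp
  have C: "Gs j S = (\<Sum>i\<le>j. u i)" unfolding Gs_def u_def by simp
  have T: "(\<Sum>i\<le>j. (real S + real j + 1 - real i) * u i) = 2 * real (Suc j) * u (Suc j)"
    using tele[where n="Suc j" and S=S and j=j] by (simp only: u_def lessThan_Suc_atMost)
  have "(\<Sum>i\<le>Suc j. (real S + real j + 1 + real i) * u i)
      = (\<Sum>i\<le>Suc j. (real j + 1 + real i) * u i) + real S * (\<Sum>i\<le>Suc j. u i)"
    by (simp add: sum_distrib_left sum.distrib[symmetric] algebra_simps)
  also have "(\<Sum>i\<le>Suc j. (real j + 1 + real i) * u i) = (\<Sum>i\<le>j. (real j + 1 + real i) * u i) + 2 * real (Suc j) * u (Suc j)"
    by simp
  also have "\<dots> = (\<Sum>i\<le>j. (real j + 1 + real i) * u i) + (\<Sum>i\<le>j. (real S + real j + 1 - real i) * u i)"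
    using T by simp
  also have "\<dots> = (\<Sum>i\<le>j. real (S + 2 * Suc j) * u i)"
    by (simp add: sum.distrib[symmetric] algebra_simps)
  also have "\<dots> = real (S + 2 * Suc j) * Gs j S" using C by (simp add: sum_distrib_left)
  finally have X: "(\<Sum>i\<le>Suc j. (real S + real j + 1 + real i) * u i) = real (S + 2 * Suc j) * Gs j S + real S * (\<Sum>i\<le>Suc j. u i)" .
  show ?thesis using X A B by linarith
qed

lemma cancel_helper: "c \<noteq> 0 \<Longrightarrow> c * (G / (c * X)) = G / (X::real)"
  by (cases "X = 0") (simp_all add: field_simps)

lemma Gs0: "Gs 0 S = fact S" by (simp add: Gs_def)

definition Pl :: "nat \<Rightarrow> nat \<Rightarrow> real" where
  "Pl I S = (if S < I \<and> odd (I+S) then Gs ((I-S-1) div 2) S / (2^((I+S-1) div 2) * fact ((I+S-1) div 2)) else 0)"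

lemma shape: "(S < (I::nat) \<and> odd (I+S)) \<longleftrightarrow> (\<exists>j. I = S+1+2*j)"
proof
  assume a: "S < I \<and> odd (I+S)"
  define d where "d = I - S - 1"
  from a have "S < I" by simp
  then have d: "I = S + 1 + d" unfolding d_def by simp
  have "even d" using a d by presburger
  then obtain j where "d = 2*j" by blast
  then show "\<exists>j. I = S+1+2*j" using d by blast
qed auto

lemma Pl_val: "Pl (S+1+2*j) S = Gs j S / (2^(S+j) * fact (S+j))"
proof -
  have "(S+1+2*j - S - 1) div 2 = j" "(S+1+2*j+S-1) div 2 = S+j" by simp_all
  then show ?thesis by (simp add: Pl_def)
qed

lemma Pl_zero: "(\<And>j. I \<noteq> S+1+2*j) \<Longrightarrow> Pl I S = 0"
  using shape[of S I] by (auto simp: Pl_def)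

lemma Pl_rec: "real (I + S) * Pl (Suc I) S = real I * Pl (I - 1) S + real S * Pl I (S - 1)"
proof (cases "\<exists>j. Suc I = S+1+2*j")
  case True
  then obtain j where j: "I = S + 2*j" by auto
  show ?thesis
  proof (cases "S + j = 0")
    case True
    then show ?thesis using j by simp
  next
    case False
    then obtain n' where n': "S + j = Suc n'" by (cases "S+j") auto
    have L: "real (I + S) * Pl (Suc I) S = Gs j S / (2^n' * fact n')"
    proof -
      have P: "Pl (Suc I) S = Gs j S / (2^(Suc n') * fact (Suc n'))"
        using Pl_val[of S j] j n' by (simp add: algebra_simps)
      have Q: "(2::real)^(Suc n') * fact (Suc n') = (2 * (real n' + 1)) * (2^n' * fact n')"
        by (simp add: algebra_simps)
      have R: "real (I + S) = 2 * (real n' + 1)" using j n' by simp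
      have Z: "2 * (real n' + 1) \<noteq> 0" by (smt (verit) of_nat_0_le_iff)
      show ?thesis unfolding P Q R using Z by (rule cancel_helper)
    qed
    have R1: "real I * Pl (I - 1) S = (if j = 0 then 0 else real (S + 2*j) * Gs (j-1) S / (2^n' * fact n'))"
    proof (cases "j = 0")
      case True
      have "Pl (I - 1) S = 0" using j True by (intro Pl_zero) auto
      then show ?thesis using True by simp
    next
      case False
      then obtain j' where j': "j = Suc j'" by (cases j) auto
      have "I - 1 = S + 1 + 2*j'" using j j' by simp
      then have "Pl (I - 1) S = Gs j' S / (2^(S+j') * fact (S+j'))" using Pl_val by simp
      moreover have "S + j' = n'" using n' j' by simp
      ultimately show ?thesis using j j' by simp
    qed
    have R2: "real S * Pl I (S - 1) = real S * Gs j (S - 1) / (2^n' * fact n')"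
    proof (cases "S = 0")
      case False
      then have "I = (S-1) + 1 + 2*j" using j by simp
      then have "Pl I (S - 1) = Gs j (S-1) / (2^(S-1+j) * fact (S-1+j))" using Pl_val by metis
      moreover have "S - 1 + j = n'" using n' False by simp
      ultimately show ?thesis by simp
    qed simp
    have G: "Gs j S = (if j = 0 then 0 else real (S + 2*j) * Gs (j-1) S) + real S * Gs j (S - 1)"
    proof (cases j)
      case 0
      then have "S \<noteq> 0" using False by simp
      then show ?thesis using 0 by (cases S) (simp_all add: Gs0)
    next
      case (Suc j')
      then show ?thesis using Gs_rec[of j' S] by simp
    qed
    show ?thesis unfolding L R1 R2 by (subst G) (simp add: add_divide_distrib)
  qed
next
  case False
  then have "Pl (Suc I) S = 0" by (intro Pl_zero) auto
  moreover have "real I * Pl (I - 1) S = 0"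
  proof (cases "I = 0")
    case False
    have "I - 1 \<noteq> S+1+2*j" for j
    proof
      assume "I - 1 = S+1+2*j"
      then have "Suc I = S+1+2*Suc j" using False by simp
      then show False using \<open>\<not> (\<exists>j. Suc I = S+1+2*j)\<close> by blast
    qed
    then have "Pl (I - 1) S = 0" by (rule Pl_zero)
    then show ?thesis by simp
  qed simp
  moreover have "real S * Pl I (S - 1) = 0"
  proof (cases "S = 0")
    case False
    have "I \<noteq> (S-1)+1+2*j" for j
    proof
      assume "I = (S-1)+1+2*j"
      then have "Suc I = S+1+2*j" using False by simp
      then show False using \<open>\<not> (\<exists>j. Suc I = S+1+2*j)\<close> by blast
    qed
    then have "Pl I (S - 1) = 0" by (rule Pl_zero)
    then show ?thesis by simp
  qed simp
  ultimately show ?thesis by (metis add.right_neutral mult_zero_right)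
qed

definition Tot :: "nat \<Rightarrow> nat \<Rightarrow> real" where
  "Tot I S = (\<Sum>j\<le>I. pp I S j) + Pl I S"

definition W :: "nat \<Rightarrow> nat \<Rightarrow> real" where
  "W I S = (\<Sum>j\<le>I. (real I - 2 * real j) * pp I S j) + real S * Pl I S"

lemma pp_big: "I < 2*j \<Longrightarrow> pp I S j = 0"
  by (simp add: pp_def Cc_zero)

lemma sum_ext: assumes "I \<le> n" shows "(\<Sum>j\<le>n. f j * pp I S j) = (\<Sum>j\<le>I. f j * pp I S j)"
proof (rule sum.mono_neutral_right)
  show "\<forall>j\<in>{..n} - {..I}. f j * pp I S j = 0" using pp_big by auto
qed (use assms in auto)

lemma sum_ext1: assumes "I \<le> n" shows "(\<Sum>j\<le>n. pp I S j) = (\<Sum>j\<le>I. pp I S j)"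
  using sum_ext[OF assms, of "\<lambda>_. 1" S] by simp

lemma Tot_rec: "real (I + S) * Tot (Suc I) S = real I * Tot (I - 1) S + real S * Tot I (S - 1)"
proof -
  have "real (I + S) * (\<Sum>j\<le>Suc I. pp (Suc I) S j)
      = (\<Sum>j\<le>Suc I. real I * (if j = 0 then 0 else pp (I - 1) S (j - 1)) + real S * pp I (S - 1) j)"
    unfolding sum_distrib_left by (rule sum.cong[OF refl], rule pp_rec)
  also have "\<dots> = real I * (\<Sum>j\<le>Suc I. (if j = 0 then 0 else pp (I - 1) S (j - 1))) + real S * (\<Sum>j\<le>Suc I. pp I (S - 1) j)"
    by (simp only: sum.distrib sum_distrib_left)
  also have "(\<Sum>j\<le>Suc I. (if j = 0 then 0 else pp (I - 1) S (j - 1))) = (\<Sum>j\<le>I. pp (I - 1) S j)"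
    by (subst sum.atMost_Suc_shift) simp
  also have "\<dots> = (\<Sum>j\<le>I - 1. pp (I - 1) S j)" by (rule sum_ext1) simp
  also have "(\<Sum>j\<le>Suc I. pp I (S - 1) j) = (\<Sum>j\<le>I. pp I (S - 1) j)" by (rule sum_ext1) simp
  finally have X: "real (I + S) * (\<Sum>j\<le>Suc I. pp (Suc I) S j) = real I * (\<Sum>j\<le>I - 1. pp (I - 1) S j) + real S * (\<Sum>j\<le>I. pp I (S - 1) j)" .
  show ?thesis unfolding Tot_def using X Pl_rec[of I S] by (simp add: algebra_simps)
qed

lemma Tot_one: "Tot I S = 1"
proof (induction I arbitrary: S rule: less_induct)
  case (less I)
  show ?case
  proof (cases I)
    case 0
    have "Pl 0 S = 0" by (rule Pl_zero) simp
    then show ?thesis using 0 by (simp add: Tot_def pp_def Cc_def Dd_def)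
  next
    case (Suc a)
    show ?thesis
    proof (cases "a + S = 0")
      case True
      then have "a = 0" "S = 0" by auto
      have "Pl 1 0 = 1" using Pl_val[of 0 0] by (simp add: Gs0)
      moreover have "pp 1 0 0 = 0" "pp 1 0 1 = 0" by (simp_all add: pp_def Cc_def)
      ultimately show ?thesis using Suc \<open>a = 0\<close> \<open>S = 0\<close> by (simp add: Tot_def)
    next
      case False
      have "real (a + S) * Tot (Suc a) S = real a * Tot (a - 1) S + real S * Tot a (S - 1)" by (rule Tot_rec)
      also have "\<dots> = real (a + S)" using less Suc by simp
      finally show ?thesis using False Suc by simp
    qed
  qed
qed

lemma W_rec: assumes "S \<ge> 1"
  shows "real (I + S) * W (Suc I) S = real I * W (I - 1) S + real S * W I (S - 1) + real S * Tot I (S - 1)"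
proof -
  have "real (I + S) * (\<Sum>j\<le>Suc I. (real (Suc I) - 2 * real j) * pp (Suc I) S j)
      = (\<Sum>j\<le>Suc I. (real (Suc I) - 2 * real j) * (real I * (if j = 0 then 0 else pp (I - 1) S (j - 1)) + real S * pp I (S - 1) j))"
    unfolding sum_distrib_left
    by (rule sum.cong[OF refl], subst mult.left_commute, subst pp_rec, rule refl)
  also have "\<dots> = (\<Sum>j\<le>Suc I. real I * ((real (Suc I) - 2 * real j) * (if j = 0 then 0 else pp (I - 1) S (j - 1)))
      + real S * ((real I - 2 * real j) * pp I (S - 1) j)
      + real S * pp I (S - 1) j)"
    by (rule sum.cong[OF refl]) (simp add: algebra_simps)
  also have "\<dots> = real I * (\<Sum>j\<le>Suc I. (real (Suc I) - 2 * real j) * (if j = 0 then 0 else pp (I - 1) S (j - 1)))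
      + real S * (\<Sum>j\<le>Suc I. (real I - 2 * real j) * pp I (S - 1) j)
      + real S * (\<Sum>j\<le>Suc I. pp I (S - 1) j)"
    by (simp only: sum.distrib sum_distrib_left)
  also have "real I * (\<Sum>j\<le>Suc I. (real (Suc I) - 2 * real j) * (if j = 0 then 0 else pp (I - 1) S (j - 1)))
      = real I * (\<Sum>j\<le>I - 1. (real (I - 1) - 2 * real j) * pp (I - 1) S j)"
  proof (cases "I = 0")
    case False
    have "(\<Sum>j\<le>Suc I. (real (Suc I) - 2 * real j) * (if j = 0 then 0 else pp (I - 1) S (j - 1)))
        = (\<Sum>j\<le>I. (real (I - 1) - 2 * real j) * pp (I - 1) S j)"
      using False by (subst sum.atMost_Suc_shift) (simp add: of_nat_diff algebra_simps)
    also have "\<dots> = (\<Sum>j\<le>I - 1. (real (I - 1) - 2 * real j) * pp (I - 1) S j)" by (rule sum_ext) simp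
    finally show ?thesis by simp
  qed simp
  also have "(\<Sum>j\<le>Suc I. (real I - 2 * real j) * pp I (S - 1) j) = (\<Sum>j\<le>I. (real I - 2 * real j) * pp I (S - 1) j)"
    by (rule sum_ext) simp
  also have "(\<Sum>j\<le>Suc I. pp I (S - 1) j) = (\<Sum>j\<le>I. pp I (S - 1) j)" by (rule sum_ext1) simp
  finally have X: "real (I + S) * (\<Sum>j\<le>Suc I. (real (Suc I) - 2 * real j) * pp (Suc I) S j) =
      real I * (\<Sum>j\<le>I - 1. (real (I - 1) - 2 * real j) * pp (I - 1) S j) +
      real S * (\<Sum>j\<le>I. (real I - 2 * real j) * pp I (S - 1) j) +
      real S * (\<Sum>j\<le>I. pp I (S - 1) j)" .
  have Sm: "real (S - 1) = real S - 1" using assms by simp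
  show ?thesis unfolding W_def Tot_def Sm using X Pl_rec[of I S]
    by (simp add: algebra_simps)
qed

lemma W_S0: "W I 0 = 0"
proof -
  have "(real I - 2 * real j) * pp I 0 j = 0" for j
  proof (cases "pp I 0 j = 0")
    case False
    then have "Cc I 0 j \<noteq> 0" by (auto simp: pp_def)
    then have "2*j \<le> I" "I - 2*j \<le> 0" by (auto simp: Cc_def split: if_splits)
    then have "real I = 2 * real j" by simp
    then show ?thesis by simp
  qed simp
  then have "(\<Sum>j\<le>I. (real I - 2 * real j) * pp I 0 j) = 0" by (intro sum.neutral) auto
  then show ?thesis by (simp add: W_def)
qed

lemma W_I0: "W 0 S = 0"
proof -
  have "Pl 0 S = 0" by (rule Pl_zero) simp
  then show ?thesis by (simp add: W_def)
qed

lemma SQ: "real S * Q I S = W I S"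
proof (induction I arbitrary: S rule: less_induct)
  case (less I)
  show ?case
  proof (cases I)
    case 0
    then show ?thesis by (simp add: W_I0)
  next
    case (Suc a)
    show ?thesis
    proof (cases S)
      case 0
      then show ?thesis by (simp add: W_S0)
    next
      case (Suc c)
      have ne: "real (a + S) \<noteq> 0" using Suc by simp
      have q: "Q I S = (real a * Q (a - 1) S + 1 + real c * Q a c) / real (a + c + 1)"
        using \<open>I = Suc a\<close> Suc by simp
      have "real (a + S) * (real S * Q I S) = real a * (real S * Q (a - 1) S) + real S + real S * (real c * Q a c)"
        unfolding q using Suc by (simp add: field_simps)
      also have "\<dots> = real a * W (a - 1) S + real S + real S * W a c"
        using less \<open>I = Suc a\<close> by simp
      also have "\<dots> = real (a + S) * W I S"
        using W_rec[of S a] Tot_one[of a "S-1"] Suc \<open>I = Suc a\<close> by simp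
      finally show ?thesis using ne by simp
    qed
  qed
qed

lemma c2_eq: "c2 x = x * (x - 1) / 2"
  by (simp add: c2_def gbinomial_Suc numeral_2_eq_2)

lemma L1: "(\<Prod>k<n. c2 (real (m + 2*n) - 2 * real k)) = fact (m + 2*n) / (fact m * 2^n)"
proof (induction n)
  case 0 then show ?case by simp
next
  case (Suc n)
  have "(\<Prod>k<Suc n. c2 (real (m + 2*Suc n) - 2 * real k))
      = c2 (real (m + 2*Suc n)) * (\<Prod>k<n. c2 (real (m + 2*Suc n) - 2 * real (Suc k)))"
    by (subst prod.lessThan_Suc_shift) simp
  also have "(\<Prod>k<n. c2 (real (m + 2*Suc n) - 2 * real (Suc k))) = (\<Prod>k<n. c2 (real (m + 2*n) - 2 * real k))"
    by (intro prod.cong) (auto simp: algebra_simps)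
  also have "\<dots> = fact (m + 2*n) / (fact m * 2^n)" by (rule Suc.IH)
  also have "c2 (real (m + 2*Suc n)) = (real (m+2*n) + 2) * (real (m+2*n) + 1) / 2"
    by (simp add: c2_eq algebra_simps)
  also have "(real (m+2*n) + 2) * (real (m+2*n) + 1) / 2 * (fact (m + 2*n) / (fact m * 2^n))
      = fact (m + 2*Suc n) / (fact m * 2^Suc n)"
  proof -
    have "(fact (m + 2*Suc n) :: real) = (real (m+2*n) + 2) * (real (m+2*n) + 1) * fact (m + 2*n)"
      by (simp add: algebra_simps)
    then show ?thesis by (simp add: field_simps)
  qed
  finally show ?case .
qed

lemma L2: "(\<Prod>k<n. real (2*n) - 2 * real k) = 2^n * fact n"
proof (induction n)
  case 0 then show ?case by simp
next
  case (Suc n)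
  have "(\<Prod>k<Suc n. real (2*Suc n) - 2 * real k) = real (2 * Suc n) * (\<Prod>k<n. real (2*Suc n) - 2 * real (Suc k))"
    by (subst prod.lessThan_Suc_shift) simp
  also have "(\<Prod>k<n. real (2*Suc n) - 2 * real (Suc k)) = (\<Prod>k<n. real (2*n) - 2 * real k)"
    by (intro prod.cong) (auto simp: algebra_simps)
  finally show ?case using Suc.IH by (simp add: algebra_simps)
qed

lemma L3: "(\<Prod>k<n. real (a + n) - real k) = fact (a + n) / fact a"
proof (induction n)
  case 0 then show ?case by simp
next
  case (Suc n)
  have "(\<Prod>k<Suc n. real (a + Suc n) - real k) = real (a + Suc n) * (\<Prod>k<n. real (a + Suc n) - real (Suc k))"
    by (subst prod.lessThan_Suc_shift) simp
  also have "(\<Prod>k<n. real (a + Suc n) - real (Suc k)) = (\<Prod>k<n. real (a + n) - real k)"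
    by (intro prod.cong) (auto simp: algebra_simps)
  also have "\<dots> = fact (a + n) / fact a" by (rule Suc.IH)
  also have "real (a + Suc n) * (fact (a + n) / fact a) = fact (a + Suc n) / fact a"
    by (simp add: fact_Suc[of "a+n"] del: fact_Suc)
  finally show ?case .
qed

lemma int_prod0: "(\<Prod>k\<in>{0..int n - 1}. f k) = (\<Prod>k<n. f (int k))"
proof -
  have "{0..int n - 1} = int ` {..<n}"
  proof
    show "{0..int n - 1} \<subseteq> int ` {..<n}"
    proof
      fix x assume x: "x \<in> {0..int n - 1}"
      then have "x = int (nat x)" "nat x \<in> {..<n}" by auto
      then show "x \<in> int ` {..<n}" by (rule image_eqI)
    qed
  qed auto
  then show ?thesis by (simp add: prod.reindex)
qed

lemma int_prod1: "(\<Prod>k\<in>{1..int n}. f k) = (\<Prod>k<n. f (int k + 1))"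
proof -
  have "{1..int n} = (\<lambda>k. int k + 1) ` {..<n}"
  proof
    show "{1..int n} \<subseteq> (\<lambda>k. int k + 1) ` {..<n}"
    proof
      fix x assume x: "x \<in> {1..int n}"
      then have "x = int (nat (x - 1)) + 1" "nat (x - 1) \<in> {..<n}" by auto
      then show "x \<in> (\<lambda>k. int k + 1) ` {..<n}" by (rule image_eqI)
    qed
  qed auto
  moreover have "inj_on (\<lambda>k. int k + 1) {..<n}" by (auto simp: inj_on_def)
  ultimately show ?thesis by (simp add: prod.reindex)
qed

lemma nat_prod1: "(\<Prod>k\<in>{1..n}. f k) = (\<Prod>k<n. f (Suc k))"
  by (simp add: prod.atLeast1_atMost_eq)

lemma inv_prod: "(\<Prod>k\<in>A. 1 / g k) = 1 / (\<Prod>k\<in>A. g k :: real)"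
  using prod_dividef[of "\<lambda>_. 1" g A] by simp

lemma dagger_iff: "dagger I S j \<longleftrightarrow> I = S + 1 + 2*j"
  unfolding dagger_def by auto

lemma piF_nd: assumes "\<not> dagger I S j" "j \<le> I" shows "piF I S j = 1 / Dd I S j"
proof -
  have r: "int I - int j - 1 - zz I S j = int (I - j) - 1" using assms by (simp add: zz_def of_nat_diff)
  have "piF I S j = (\<Prod>k<I-j. 1 / real_of_int (int I + int S - 1 - 2 * int k))"
    unfolding piF_def r int_prod0 ..
  also have "\<dots> = (\<Prod>k<I-j. 1 / (real I + real S - 1 - 2 * real k))" by simp
  also have "\<dots> = 1 / Dd I S j" unfolding Dd_def by (rule inv_prod)
  finally show ?thesis .
qed

lemma piF_d: assumes "I = S + 1 + 2*j" shows "piF I S j = 1 / (2^(S+j) * fact (S+j))"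
proof -
  have d: "dagger I S j" using assms by (simp add: dagger_iff)
  have r: "int I - int j - 1 - zz I S j = int (S + j) - 1" using assms d by (simp add: zz_def)
  have "piF I S j = (\<Prod>k<S+j. 1 / real_of_int (int I + int S - 1 - 2 * int k))"
    unfolding piF_def r int_prod0 ..
  also have "\<dots> = (\<Prod>k<S+j. 1 / (real (2*(S+j)) - 2 * real k))"
    using assms by (intro prod.cong) simp_all
  also have "\<dots> = 1 / (2^(S+j) * fact (S+j))" unfolding inv_prod L2 ..
  finally show ?thesis .
qed

lemma NF_nd: assumes "\<not> dagger I S j" "2*j \<le> I" shows "NF I S j = fact I / (fact j * fact (I - 2*j) * 2^j)"
proof -
  define m where "m = I - 2*j"
  have m: "I = m + 2*j" using assms(2) by (simp add: m_def)
  have pr: "(\<Prod>k\<in>{1..j}. c2 (real I - 2 * (real k - 1))) = (\<Prod>k<j. c2 (real I - 2 * real k))"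
    unfolding nat_prod1 by simp
  have "NF I S j = (1 / fact j) * (\<Prod>k<j. c2 (real I - 2 * real k))"
    using assms(1) unfolding NF_def pr by simp
  also have "(\<Prod>k<j. c2 (real I - 2 * real k)) = fact I / (fact m * 2^j)"
    using L1[where n=j and m=m] m by simp
  finally show ?thesis using m by simp
qed

lemma ar_abs: fixes a b A R J P F G :: real
  assumes "a \<noteq> 0" "b \<noteq> 0" "A \<noteq> 0" "R \<noteq> 0" "J \<noteq> 0" "P \<noteq> 0"
  shows "F / (J * (a * A) * P) * ((a * A) * (G / (A * R))) = a / b * (F * (b * G) / (P * J * (a * A) * R))"
  using assms by (simp add: field_simps)

lemma arith4: fixes I j m' r :: nat shows
  "fact I / (fact j * fact (Suc m') * 2^j) * (fact (Suc m') * (fact (m'+r) / (fact m' * fact r)))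
   = real (Suc m') / real (Suc (m'+r)) * (fact I * fact (Suc (m'+r)) / (2^j * fact j * fact (Suc m') * fact r) :: real)"
proof -
  have a: "(fact (Suc m') :: real) = real (Suc m') * fact m'" by simp
  have b: "(fact (Suc (m'+r)) :: real) = real (Suc (m'+r)) * fact (m'+r)" by simp
  show ?thesis unfolding a b by (rule ar_abs) simp_all
qed

lemma NFMF_nd: assumes "\<not> dagger I S j" "2*j \<le> I" "S \<ge> 1"
  shows "NF I S j * MF I S j = (real I - 2 * real j) / real S * Cc I S j"
proof (cases "I = 2*j")
  case True
  then have "MF I S j = 0" using assms(1) by (simp add: MF_def binomZ_def)
  then show ?thesis using True by simp
next
  case False
  then obtain m' where m': "I - 2*j = Suc m'" using assms(2) by (cases "I - 2*j") auto
  have B: "binomZ (int S - 1) (int I - 1 - 2 * int j) = real ((S - 1) choose m')"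
  proof -
    have i: "int I - 1 - 2 * int j = int m'" using m' assms(2) by linarith
    have "binomZ (int S - 1) (int I - 1 - 2 * int j) = real_of_int (int S - 1) gchoose m'"
      unfolding binomZ_def i by simp
    also have "real_of_int (int S - 1) = real (S - 1)" using assms(3) by (simp add: of_nat_diff)
    also have "real (S - 1) gchoose m' = real ((S - 1) choose m')" by (rule binomial_gbinomial[symmetric])
    finally show ?thesis .
  qed
  have MF: "MF I S j = fact (Suc m') * real ((S - 1) choose m')"
    using assms(1) m' B by (simp add: MF_def)
  show ?thesis
  proof (cases "Suc m' \<le> S")
    case True
    define r where "r = S - Suc m'"
    have r: "S = Suc (m' + r)" using True by (simp add: r_def)
    have ch: "real ((S - 1) choose m') = fact (m'+r) / (fact m' * fact r)"
      using r by (simp add: binomial_fact)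
    have Cc: "Cc I S j = fact I * fact (Suc (m'+r)) / (2^j * fact j * fact (Suc m') * fact r)"
      using r m' assms(2) by (simp add: Cc_def)
    have "I = 2*j + Suc m'" using m' assms(2) by linarith
    then have rI: "real I - 2 * real j = real (Suc m')" by simp
    have "NF I S j * MF I S j = fact I / (fact j * fact (Suc m') * 2^j) * (fact (Suc m') * (fact (m'+r) / (fact m' * fact r)))"
      unfolding NF_nd[OF assms(1,2)] MF ch m' ..
    also have "\<dots> = real (Suc m') / real (Suc (m'+r)) * (fact I * fact (Suc (m'+r)) / (2^j * fact j * fact (Suc m') * fact r))"
      by (rule arith4)
    also have "\<dots> = real (Suc m') / real S * Cc I S j" by (subst Cc) (simp add: r)
    finally show ?thesis unfolding rI .
  next
    case False
    then have "(S - 1) choose m' = 0" using assms(3) by (intro binomial_eq_0) linarith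
    moreover have "Cc I S j = 0" using False m' by (intro Cc_zero) simp
    ultimately show ?thesis using MF by simp
  qed
qed

lemma summand_nd: assumes "\<not> dagger I S j" "2*j \<le> I" "S \<ge> 1"
  shows "piF I S j * NF I S j * MF I S j = (real I - 2 * real j) / real S * pp I S j"
proof -
  have "piF I S j * NF I S j * MF I S j = (1 / Dd I S j) * (NF I S j * MF I S j)"
    using piF_nd[OF assms(1)] assms(2) by simp
  also have "\<dots> = (real I - 2 * real j) / real S * pp I S j"
    unfolding NFMF_nd[OF assms] pp_def by simp
  finally show ?thesis .
qed
lemma Ndag_term:
  assumes I: "I = S+1+2*j" and j2: "2 \<le> j" and ij: "i \<le> j"
  shows "Ndag I S j (i + (S+1+j)) = fact (S+j+i) / (2^i * fact i) / fact S"
proof -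
  define h where "h = i + (S+1+j)"
  have hI: "I - h = j - i" "h \<le> I" using I ij by (simp_all add: h_def)
  consider "i = j" | "Suc i = j" | "i + 2 \<le> j" using ij by linarith
  then show ?thesis
  proof cases
    case 1
    then have hh: "h = I" using I by (simp add: h_def)
    have "(\<Prod>k\<in>{0..int j - 1}. c2 (real I - 1 - 2 * real_of_int k)) = (\<Prod>k<j. c2 (real (S + 2*j) - 2 * real k))"
      unfolding int_prod0 using I by (intro prod.cong) simp_all
    also have "\<dots> = fact (S + 2*j) / (fact S * 2^j)" by (rule L1)
    finally have P: "(\<Prod>k\<in>{0..int j - 1}. c2 (real I - 1 - 2 * real_of_int k)) = fact (S + 2*j) / (fact S * 2^j)" .
    have "Ndag I S j h = (1 / fact j) * (fact (S + 2*j) / (fact S * 2^j))"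
      unfolding Ndag_def hh P by simp
    also have "\<dots> = fact (S+j+i) / (2^i * fact i) / fact S" using 1 by (simp add: mult_2 add.assoc)
    finally show ?thesis unfolding h_def .
  next
    case 2
    then have hh: "h = I - 1" "h \<noteq> I" using I by (simp_all add: h_def)
    have e: "int j - 2 = int (j - 1) - 1" using j2 by simp
    have "(\<Prod>k\<in>{0..int j - 2}. c2 (real I - 3 - 2 * real_of_int k)) = (\<Prod>k<j-1. c2 (real (S + 2*(j-1)) - 2 * real k))"
      unfolding e int_prod0 using I j2 by (intro prod.cong) (simp_all add: of_nat_diff algebra_simps)
    also have "\<dots> = fact (S + 2*(j-1)) / (fact S * 2^(j-1))" by (rule L1)
    finally have P: "(\<Prod>k\<in>{0..int j - 2}. c2 (real I - 3 - 2 * real_of_int k)) = fact (S + 2*(j-1)) / (fact S * 2^(j-1))" .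
    have "Ndag I S j h = (1 / fact (j - 1)) * (real I - 2) * (fact (S + 2*(j-1)) / (fact S * 2^(j-1)))"
      unfolding Ndag_def P using hh by simp
    also have "real I - 2 = real (Suc (S + 2*(j-1)))" using I j2 by simp
    also have "(1 / fact (j - 1)) * real (Suc (S + 2*(j-1))) * (fact (S + 2*(j-1)) / (fact S * 2^(j-1)))
        = fact (Suc (S + 2*(j-1))) / (2^(j-1) * fact (j-1)) / fact S"
      by (simp only: fact_Suc of_nat_mult) (simp add: field_simps)
    also have "Suc (S + 2*(j-1)) = S + j + i" using 2 by simp
    also have "j - 1 = i" using 2 by simp
    finally show ?thesis by (simp add: h_def)
  next
    case 3
    then have hh: "h \<noteq> I" "h \<noteq> I - 1" "\<not> j < I - h" using hI I by (simp_all add: h_def)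
    have P1: "(\<Prod>k\<in>{1..int I - int h}. real h - real_of_int k) = fact (S+j+i) / fact (S+2*i)"
    proof -
      have e: "int I - int h = int (j - i)" using hI by (simp add: of_nat_diff)
      have "(\<Prod>k\<in>{1..int I - int h}. real h - real_of_int k) = (\<Prod>k<j-i. real ((S+2*i) + (j-i)) - real k)"
        unfolding e int_prod1 using ij by (intro prod.cong) (simp_all add: h_def)
      also have "\<dots> = fact ((S+2*i) + (j-i)) / fact (S+2*i)" by (rule L3)
      also have "(S+2*i) + (j-i) = S+j+i" using ij by simp
      finally show ?thesis .
    qed
    show ?thesis
    proof (cases "i = 0")
      case True
      then have "j = I - h" using hI by simp
      then have "Ndag I S j h = (\<Prod>k\<in>{1..int I - int h}. real h - real_of_int k)"
        unfolding Ndag_def using hh by simp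
      then show ?thesis using P1 True by (simp add: h_def)
    next
      case False
      have ji: "j - (I - h) = i" "j > I - h" using hI False ij by simp_all
      have P2: "(\<Prod>d\<in>{1..int j - int I + int h}. c2 (2 * real h - real I - 1 - 2 * (real_of_int d - 1))) = fact (S+2*i) / (fact S * 2^i)"
      proof -
        have e: "int j - int I + int h = int i" using hI ij by (simp add: of_nat_diff)
        have "(\<Prod>d\<in>{1..int j - int I + int h}. c2 (2 * real h - real I - 1 - 2 * (real_of_int d - 1))) = (\<Prod>k<i. c2 (real (S + 2*i) - 2 * real k))"
          unfolding e int_prod1 using I by (intro prod.cong) (simp_all add: h_def algebra_simps)
        also have "\<dots> = fact (S+2*i) / (fact S * 2^i)" by (rule L1)
        finally show ?thesis .
      qed
      have "Ndag I S j h = (1 / fact i) * (fact (S+j+i) / fact (S+2*i)) * (fact (S+2*i) / (fact S * 2^i))"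
        unfolding Ndag_def P1 P2 using hh ji by simp
      then show ?thesis by (simp add: h_def field_simps)
    qed
  qed
qed
lemma NF_dag: assumes I: "I = S+1+2*j" shows "NF I S j = Gs j S / fact S"
proof -
  have d: "dagger I S j" using I by (simp add: dagger_iff)
  consider "j = 0" | "j = 1" | "2 \<le> j" by linarith
  then show ?thesis
  proof cases
    case 1
    then show ?thesis using d by (simp add: NF_def Gs0)
  next
    case 2
    have G: "Gs 1 S = fact (S+1) + fact (S+2) / 2" by (simp add: Gs_def numeral_2_eq_2)
    have f1: "(fact (S+1) :: real) = (real S + 1) * fact S" by (simp add: algebra_simps)
    have f2: "(fact (S+2) :: real) = (real S + 2) * (real S + 1) * fact S"
      by (simp add: numeral_2_eq_2 algebra_simps)
    have "NF I S j = c2 (real I) - 1" using d 2 by (simp add: NF_def)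
    also have "\<dots> = (real S + 3) * (real S + 2) / 2 - 1" using I 2 by (simp add: c2_eq algebra_simps)
    also have "\<dots> = Gs 1 S / fact S" unfolding G f1 f2 by (simp add: field_simps)
    finally show ?thesis using 2 by simp
  next
    case 3
    have "NF I S j = (\<Sum>h\<in>{S+1..I}. Ndag I S j h)" using d 3 by (simp add: NF_def)
    also have "{S+1..I} = {S+1..S+j} \<union> {0+(S+1+j)..j+(S+1+j)}" using I by auto
    also have "(\<Sum>h\<in>{S+1..S+j} \<union> {0+(S+1+j)..j+(S+1+j)}. Ndag I S j h)
        = (\<Sum>h\<in>{S+1..S+j}. Ndag I S j h) + (\<Sum>h\<in>{0+(S+1+j)..j+(S+1+j)}. Ndag I S j h)"
      by (rule sum.union_disjoint) auto
    also have "(\<Sum>h\<in>{S+1..S+j}. Ndag I S j h) = 0"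
    proof (rule sum.neutral, rule ballI)
      fix h assume h: "h \<in> {S+1..S+j}"
      then have "h \<noteq> I" "h \<noteq> I - 1" "j < I - h" using I 3 by auto
      then show "Ndag I S j h = 0" by (simp add: Ndag_def)
    qed
    also have "(\<Sum>h\<in>{0+(S+1+j)..j+(S+1+j)}. Ndag I S j h) = (\<Sum>i\<in>{0..j}. Ndag I S j (i + (S+1+j)))"
      by (rule sum.shift_bounds_cl_nat_ivl)
    also have "\<dots> = (\<Sum>i\<in>{0..j}. fact (S+j+i) / (2^i * fact i) / fact S)"
      using Ndag_term[OF I 3] by (intro sum.cong) auto
    also have "\<dots> = Gs j S / fact S" unfolding Gs_def atLeast0AtMost by (simp add: sum_divide_distrib)
    finally show ?thesis by simp
  qed
qed

lemma summand_d: assumes I: "I = S+1+2*j" shows "piF I S j * NF I S j * MF I S j = Pl I S"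
proof -
  have d: "dagger I S j" using I by (simp add: dagger_iff)
  have "piF I S j * NF I S j * MF I S j = 1 / (2^(S+j) * fact (S+j)) * (Gs j S / fact S) * fact S"
    unfolding piF_d[OF I] NF_dag[OF I] using d by (simp add: MF_def)
  also have "\<dots> = Gs j S / (2^(S+j) * fact (S+j))" by simp
  also have "\<dots> = Pl I S" using Pl_val I by simp
  finally show ?thesis .
qed

lemma Lb_bound: "j < Lb I S \<Longrightarrow> S < I - 2*j"
  unfolding Lb_def by (auto split: if_splits)

lemma formula_W: assumes S1: "S \<ge> 1"
  shows "(\<Sum>j\<in>{Lb I S..I div 2}. piF I S j * NF I S j * MF I S j) = W I S / real S"
proof -
  define A where "A = {Lb I S..I div 2}"
  have step1: "piF I S j * NF I S j * MF I S j = (real I - 2 * real j) / real S * pp I S j + (if dagger I S j then Pl I S else 0)"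
    if "j \<in> A" for j
  proof (cases "dagger I S j")
    case True
    then have I: "I = S+1+2*j" by (simp add: dagger_iff)
    have "pp I S j = 0" using I by (intro pp_zero Cc_zero) simp
    then show ?thesis using summand_d[OF I] True by simp
  next
    case False
    have "2*j \<le> I" using that by (auto simp: A_def)
    then show ?thesis using summand_nd[OF False _ S1] False by simp
  qed
  have "(\<Sum>j\<in>A. piF I S j * NF I S j * MF I S j)
      = (\<Sum>j\<in>A. (real I - 2 * real j) / real S * pp I S j) + (\<Sum>j\<in>A. (if dagger I S j then Pl I S else 0))"
    using step1 by (simp add: sum.distrib)
  also have "(\<Sum>j\<in>A. (real I - 2 * real j) / real S * pp I S j) = (\<Sum>j\<le>I. (real I - 2 * real j) / real S * pp I S j)"
  proof (rule sum.mono_neutral_left)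
    show "A \<subseteq> {..I}" by (auto simp: A_def)
    show "\<forall>j\<in>{..I} - A. (real I - 2 * real j) / real S * pp I S j = 0"
    proof
      fix j assume j: "j \<in> {..I} - A"
      then consider "j < Lb I S" | "I div 2 < j" by (auto simp: A_def)
      then have "pp I S j = 0"
      proof cases
        case 1
        then show ?thesis using Lb_bound[OF 1] by (intro pp_zero Cc_zero) simp
      next
        case 2
        then show ?thesis by (intro pp_big) linarith
      qed
      then show "(real I - 2 * real j) / real S * pp I S j = 0" by simp
    qed
  qed simp
  also have "(\<Sum>j\<in>A. (if dagger I S j then Pl I S else 0)) = Pl I S"
  proof (cases "\<exists>jd. I = S+1+2*jd")
    case True
    then obtain jd where jd: "I = S+1+2*jd" by blast
    have "dagger I S j \<longleftrightarrow> j = jd" for j using jd by (auto simp: dagger_iff)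
    moreover have "jd \<in> A"
    proof -
      have "Lb I S = jd" using jd by (simp add: Lb_def)
      moreover have "jd \<le> I div 2" using jd by simp
      ultimately show ?thesis by (simp add: A_def)
    qed
    ultimately show ?thesis by (simp add: A_def)
  next
    case False
    then have "Pl I S = 0" by (intro Pl_zero) auto
    moreover have "\<not> dagger I S j" for j using False by (auto simp: dagger_iff)
    ultimately show ?thesis by simp
  qed
  also have "(\<Sum>j\<le>I. (real I - 2 * real j) / real S * pp I S j) + Pl I S = W I S / real S"
    using S1 unfolding W_def by (simp add: sum_divide_distrib[symmetric] field_simps)
  finally show ?thesis unfolding A_def .
qed

theorem mainTheorem2:
  fixes I S w :: nat
  assumes "S \<ge> 1" and "I \<le> w" and "w < I + S"
  shows "P_infect I S w = (\<Sum>j\<in>{Lb I S..I div 2}. piF I S j * NF I S j * MF I S j)"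
proof -
  have "P_infect I S w = Q I S" using assms by (intro P_infect_Q)
  also have "\<dots> = W I S / real S" using SQ[of S I] assms(1) by (simp add: field_simps)
  also have "\<dots> = (\<Sum>j\<in>{Lb I S..I div 2}. piF I S j * NF I S j * MF I S j)"
    using formula_W[OF assms(1)] by simp
  finally show ?thesis .
qed

end
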